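(* Let $1\le n_1\le n$ and let $([n_1],v,e),([n_1],u,g)$ be graphs. Extend both to size $n$ by $v_i=u_i=x_*$ for $n_1+1\le i\le n$ and $e_{ii'}=g_{ii'}=y_0$ whenever $\max\{i,i'\}\ge n_1+1$. Then $D_n(([n],v,e),([n],u,g))\le D_{n_1}(([n_1],v,e),([n_1],u,g))$.
   Context: $(\mathcal X,d_{\mathcal X})$, $(\mathcal Y,d_{\mathcal Y})$ are pseudometric spaces with $\mathrm{diam}(\mathcal X)\le C_{\mathcal X}$, $\mathrm{diam}(\mathcal Y)\le C_{\mathcal Y}$, $y_0\in\mathcal Y$ a distinguished "no edge" element, $p\ge1$, $C_2^p\ge C_{\mathcal X}^p+C_{\mathcal Y}^p$. A new point $x_*\notin\mathcal X$ is adjoined with $d_{\mathcal X}(x,x_* )=d_{\mathcal X}(x_*,x)=C_2$ for $x\in\mathcal X$, $d_{\mathcal X}(x_*,x_* )=0$. A graph $([n],v,e)$ has $v:[n]\to\mathcal X\cup\{x_*\}$ and symmetric $e:[n]^2\to\mathcal Y$ with $e_{ii}=y_0$; $S_n$ is the set of permutations of $[n]=\{1,\dots,n\}$. For two graphs of equal size $N\ge1$, $$D_N\big(([N],a,g),([N],b,h)\big)=N^{-1/p}\min_{\pi\in S_N}\Big[\sum_{i\in[N]}d_{\mathcal X}(a_i,b_{\pi(i)})^p+\frac{1}{2(N-1)}\sum_{(i,i')\in[N]^2}d_{\mathcal Y}(g_{ii'},h_{\pi(i)\pi(i')})^p\Big]^{1/p},$$ with $0/0:=0$. *)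

theory Defs
  imports "HOL-Combinatorics.Permutations" Complex_Main
begin

definition pseudometric :: "('a \<Rightarrow> 'a \<Rightarrow> real) \<Rightarrow> bool" where
  "pseudometric d \<longleftrightarrow> (\<forall>x. d x x = 0) \<and> (\<forall>x y. 0 \<le> d x y) \<and> (\<forall>x y. d x y = d y x)
     \<and> (\<forall>x y z. d x z \<le> d x y + d y z)"

text \<open>The space X extended by the new point x_*, modelled as None.\<close>
fun dXstar :: "('x \<Rightarrow> 'x \<Rightarrow> real) \<Rightarrow> real \<Rightarrow> 'x option \<Rightarrow> 'x option \<Rightarrow> real" where
  "dXstar dX C2 (Some a) (Some b) = dX a b"
| "dXstar dX C2 None None = 0"
| "dXstar dX C2 (Some a) None = C2"
| "dXstar dX C2 None (Some b) = C2"

definition is_graph :: "'y \<Rightarrow> nat \<Rightarrow> (nat \<Rightarrow> 'x option) \<Rightarrow> (nat \<Rightarrow> nat \<Rightarrow> 'y) \<Rightarrow> bool" where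
  "is_graph y0 n v e \<longleftrightarrow> (\<forall>i\<in>{1..n}. \<forall>i'\<in>{1..n}. e i i' = e i' i) \<and> (\<forall>i\<in>{1..n}. e i i = y0)"

definition match_cost ::
  "('x \<Rightarrow> 'x \<Rightarrow> real) \<Rightarrow> real \<Rightarrow> ('y \<Rightarrow> 'y \<Rightarrow> real) \<Rightarrow> real \<Rightarrow> nat
   \<Rightarrow> (nat \<Rightarrow> 'x option) \<Rightarrow> (nat \<Rightarrow> nat \<Rightarrow> 'y) \<Rightarrow> (nat \<Rightarrow> 'x option) \<Rightarrow> (nat \<Rightarrow> nat \<Rightarrow> 'y)
   \<Rightarrow> (nat \<Rightarrow> nat) \<Rightarrow> real" where
  "match_cost dX C2 dY p N a g b h \<pi> =
     (\<Sum>i\<in>{1..N}. dXstar dX C2 (a i) (b (\<pi> i)) powr p)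
     + 1 / (2 * (real N - 1)) *
       (\<Sum>i\<in>{1..N}. \<Sum>i'\<in>{1..N}. dY (g i i') (h (\<pi> i) (\<pi> i')) powr p)"

text \<open>D_N; note that in Isabelle x / 0 = 0, matching the convention 0/0 := 0.\<close>
definition D ::
  "('x \<Rightarrow> 'x \<Rightarrow> real) \<Rightarrow> real \<Rightarrow> ('y \<Rightarrow> 'y \<Rightarrow> real) \<Rightarrow> real \<Rightarrow> nat
   \<Rightarrow> (nat \<Rightarrow> 'x option) \<Rightarrow> (nat \<Rightarrow> nat \<Rightarrow> 'y) \<Rightarrow> (nat \<Rightarrow> 'x option) \<Rightarrow> (nat \<Rightarrow> nat \<Rightarrow> 'y)
   \<Rightarrow> real" where
  "D dX C2 dY p N a g b h =
     real N powr (- 1 / p) *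
     (Min ((\<lambda>\<pi>. match_cost dX C2 dY p N a g b h \<pi>) ` {\<pi>. \<pi> permutes {1..N}})) powr (1 / p)"

definition ext_v :: "nat \<Rightarrow> (nat \<Rightarrow> 'x option) \<Rightarrow> nat \<Rightarrow> 'x option" where
  "ext_v n1 v i = (if i \<le> n1 then v i else None)"

definition ext_e :: "'y \<Rightarrow> nat \<Rightarrow> (nat \<Rightarrow> nat \<Rightarrow> 'y) \<Rightarrow> nat \<Rightarrow> nat \<Rightarrow> 'y" where
  "ext_e y0 n1 e i i' = (if max i i' \<le> n1 then e i i' else y0)"

end

theory Submission
  imports Defs
begin

lemma cost_nonneg:
  assumes "C2 \<ge> 0" "1 \<le> N"
  shows "0 \<le> match_cost dX C2 dY p N a g b h \<pi>"
  unfolding match_cost_def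
  using assms by (intro add_nonneg_nonneg mult_nonneg_nonneg sum_nonneg) auto

lemma key_ineq:
  fixes A B :: real and n1 n :: nat
  assumes "A \<ge> 0" "B \<ge> 0" "1 \<le> n1" "n1 \<le> n" "n1 = 1 \<longrightarrow> B = 0"
  shows "(A + 1 / (2 * (real n - 1)) * B) / real n \<le> (A + 1 / (2 * (real n1 - 1)) * B) / real n1"
proof (cases "n1 = 1")
  case True
  then have "B = 0" using assms by auto
  then show ?thesis using True assms by (simp add: divide_le_eq mult_le_cancel_left1)
next
  case False
  then have n1: "real n1 \<ge> 2" using assms by simp
  have "1 / (2 * (real n - 1)) * B \<le> 1 / (2 * (real n1 - 1)) * B"
    using n1 assms by (intro mult_right_mono divide_left_mono) auto
  then have h: "A + 1 / (2 * (real n - 1)) * B \<le> A + 1 / (2 * (real n1 - 1)) * B" by simp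
  have "(A + 1 / (2 * (real n - 1)) * B) / real n \<le> (A + 1 / (2 * (real n1 - 1)) * B) / real n"
    using h n1 assms by (intro divide_right_mono) auto
  also have "\<dots> \<le> (A + 1 / (2 * (real n1 - 1)) * B) / real n1"
    using n1 assms h by (intro divide_left_mono) (auto intro!: add_nonneg_nonneg mult_nonneg_nonneg)
  finally show ?thesis .
qed

lemma powr_form:
  fixes X :: real
  assumes "real n > 0" "X \<ge> 0"
  shows "real n powr (- 1 / p) * X powr (1 / p) = (X / real n) powr (1 / p)"
  proof -
  have "real n powr (- 1 / p) = inverse (real n powr (1 / p))"
    by (simp add: powr_minus[symmetric])
  moreover have "(X / real n) powr (1 / p) = X powr (1/p) / real n powr (1/p)"
    using assms by (simp add: powr_divide)
  ultimately show ?thesis by (simp add: divide_inverse mult.commute)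
qed

theorem lemmaC:
  fixes dX :: "'x \<Rightarrow> 'x \<Rightarrow> real" and dY :: "'y \<Rightarrow> 'y \<Rightarrow> real"
    and CX CY C2 p :: real and y0 :: 'y and n1 n :: nat
    and v u :: "nat \<Rightarrow> 'x option" and e g :: "nat \<Rightarrow> nat \<Rightarrow> 'y"
  assumes "pseudometric dX" and "pseudometric dY"
    and "\<forall>a b. dX a b \<le> CX" and "\<forall>a b. dY a b \<le> CY"
    and "p \<ge> 1" and "C2 \<ge> 0" and "C2 powr p \<ge> CX powr p + CY powr p"
    and "1 \<le> n1" and "n1 \<le> n"
    and "is_graph y0 n1 v e" and "is_graph y0 n1 u g"
  shows "D dX C2 dY p n (ext_v n1 v) (ext_e y0 n1 e) (ext_v n1 u) (ext_e y0 n1 g)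
         \<le> D dX C2 dY p n1 v e u g"
proof -
  note pm = assms(2)[unfolded pseudometric_def]
  let ?S1 = "(\<lambda>\<pi>. match_cost dX C2 dY p n1 v e u g \<pi>) ` {\<pi>. \<pi> permutes {1..n1}}"
  let ?S = "(\<lambda>\<pi>. match_cost dX C2 dY p n (ext_v n1 v) (ext_e y0 n1 e) (ext_v n1 u) (ext_e y0 n1 g) \<pi>) ` {\<pi>. \<pi> permutes {1..n}}"
  have fin1: "finite ?S1" and fin: "finite ?S" by (auto intro: finite_permutations)
  have ne1: "?S1 \<noteq> {}" using permutes_id by blast
  have "Min ?S1 \<in> ?S1" using fin1 ne1 by (rule Min_in)
  then obtain \<pi> where pi1: "\<pi> permutes {1..n1}" and M1: "Min ?S1 = match_cost dX C2 dY p n1 v e u g \<pi>"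
    by auto
  have pin: "\<pi> permutes {1..n}" by (rule permutes_subset[OF pi1]) (use assms(9) in auto)
  have pout: "\<And>i. i \<notin> {1..n1} \<Longrightarrow> \<pi> i = i" using pi1 by (simp add: permutes_def)
  have pin1: "\<And>i. i \<in> {1..n1} \<Longrightarrow> \<pi> i \<in> {1..n1}" using permutes_in_image[OF pi1] by blast
  define A where "A = (\<Sum>i\<in>{1..n1}. dXstar dX C2 (v i) (u (\<pi> i)) powr p)"
  define B where "B = (\<Sum>i\<in>{1..n1}. \<Sum>i'\<in>{1..n1}. dY (e i i') (g (\<pi> i) (\<pi> i')) powr p)"
  have A0: "A \<ge> 0" unfolding A_def by (auto intro: sum_nonneg)
  have B0: "B \<ge> 0" unfolding B_def by (intro sum_nonneg) auto
  have B1: "n1 = 1 \<longrightarrow> B = 0"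
  proof
    assume "n1 = 1"
    then have "\<pi> 1 = 1" using pin1[of 1] by auto
    then show "B = 0" using \<open>n1 = 1\<close> assms(10,11) pm unfolding B_def is_graph_def by simp
  qed
  have c1: "match_cost dX C2 dY p n1 v e u g \<pi> = A + 1 / (2 * (real n1 - 1)) * B"
    unfolding match_cost_def A_def B_def by simp
  have sA: "(\<Sum>i\<in>{1..n}. dXstar dX C2 (ext_v n1 v i) (ext_v n1 u (\<pi> i)) powr p) = A"
  proof -
    have "(\<Sum>i\<in>{1..n}. dXstar dX C2 (ext_v n1 v i) (ext_v n1 u (\<pi> i)) powr p)
        = (\<Sum>i\<in>{1..n1}. dXstar dX C2 (ext_v n1 v i) (ext_v n1 u (\<pi> i)) powr p)"
    proof (rule sum.mono_neutral_right)
      show "\<forall>i\<in>{1..n} - {1..n1}. dXstar dX C2 (ext_v n1 v i) (ext_v n1 u (\<pi> i)) powr p = 0"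
        using pout by (auto simp: ext_v_def)
    qed (use assms(9) in auto)
    also have "\<dots> = A" unfolding A_def
      by (rule sum.cong) (use pin1 in \<open>auto simp: ext_v_def\<close>)
    finally show ?thesis .
  qed
  have sB: "(\<Sum>i\<in>{1..n}. \<Sum>i'\<in>{1..n}. dY (ext_e y0 n1 e i i') (ext_e y0 n1 g (\<pi> i) (\<pi> i')) powr p) = B"
  proof -
    have inner: "(\<Sum>i'\<in>{1..n}. dY (ext_e y0 n1 e i i') (ext_e y0 n1 g (\<pi> i) (\<pi> i')) powr p)
       = (if i \<le> n1 then (\<Sum>i'\<in>{1..n1}. dY (e i i') (g (\<pi> i) (\<pi> i')) powr p) else 0)"
      if "i \<in> {1..n}" for i
    proof (cases "i \<le> n1")
      case True
      have "(\<Sum>i'\<in>{1..n}. dY (ext_e y0 n1 e i i') (ext_e y0 n1 g (\<pi> i) (\<pi> i')) powr p)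
          = (\<Sum>i'\<in>{1..n1}. dY (ext_e y0 n1 e i i') (ext_e y0 n1 g (\<pi> i) (\<pi> i')) powr p)"
      proof (rule sum.mono_neutral_right)
        show "\<forall>i'\<in>{1..n} - {1..n1}. dY (ext_e y0 n1 e i i') (ext_e y0 n1 g (\<pi> i) (\<pi> i')) powr p = 0"
          using pout pm by (auto simp: ext_e_def)
      qed (use assms(9) in auto)
      also have "\<dots> = (\<Sum>i'\<in>{1..n1}. dY (e i i') (g (\<pi> i) (\<pi> i')) powr p)"
      proof (rule sum.cong)
        fix i' assume "i' \<in> {1..n1}"
        then show "dY (ext_e y0 n1 e i i') (ext_e y0 n1 g (\<pi> i) (\<pi> i')) powr p = dY (e i i') (g (\<pi> i) (\<pi> i')) powr p"
          using pin1[of i'] pin1[of i] True that by (auto simp: ext_e_def)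
      qed simp
      finally show ?thesis using True by simp
    next
      case False
      then have "\<pi> i = i" using pout by auto
      then show ?thesis using False pm by (simp add: ext_e_def)
    qed
    have "(\<Sum>i\<in>{1..n}. \<Sum>i'\<in>{1..n}. dY (ext_e y0 n1 e i i') (ext_e y0 n1 g (\<pi> i) (\<pi> i')) powr p)
        = (\<Sum>i\<in>{1..n}. (if i \<le> n1 then (\<Sum>i'\<in>{1..n1}. dY (e i i') (g (\<pi> i) (\<pi> i')) powr p) else 0))"
      using inner by (rule sum.cong[OF refl])
    also have "\<dots> = (\<Sum>i\<in>{1..n1}. (if i \<le> n1 then (\<Sum>i'\<in>{1..n1}. dY (e i i') (g (\<pi> i) (\<pi> i')) powr p) else 0))"
      by (rule sum.mono_neutral_right) (use assms(9) in auto)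
    also have "\<dots> = B" unfolding B_def by (rule sum.cong) auto
    finally show ?thesis .
  qed
  have c: "match_cost dX C2 dY p n (ext_v n1 v) (ext_e y0 n1 e) (ext_v n1 u) (ext_e y0 n1 g) \<pi>
        = A + 1 / (2 * (real n - 1)) * B"
    unfolding match_cost_def sA sB by simp
  have Mle: "Min ?S \<le> A + 1 / (2 * (real n - 1)) * B"
    using fin pin c[symmetric] by (intro Min_le) auto
  have ne: "?S \<noteq> {}" using permutes_id by blast
  have M0: "Min ?S \<ge> 0"
    using fin ne assms(6,8,9) by (subst Min_ge_iff) (auto intro!: cost_nonneg)
  have n0: "real n > 0" "real n1 > 0" using assms(8,9) by auto
  have "D dX C2 dY p n (ext_v n1 v) (ext_e y0 n1 e) (ext_v n1 u) (ext_e y0 n1 g)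
      = (Min ?S / real n) powr (1 / p)"
    unfolding D_def using n0(1) M0 by (rule powr_form)
  also have "\<dots> \<le> ((A + 1 / (2 * (real n - 1)) * B) / real n) powr (1 / p)"
    using Mle M0 n0 assms(5) by (intro powr_mono2 divide_right_mono) auto
  also have "\<dots> \<le> ((A + 1 / (2 * (real n1 - 1)) * B) / real n1) powr (1 / p)"
    using key_ineq[OF A0 B0 assms(8,9) B1] M0 Mle n0 assms(5)
    by (intro powr_mono2) auto
  also have "\<dots> = D dX C2 dY p n1 v e u g"
    unfolding D_def M1 c1 using n0 A0 B0 assms(8)
    by (intro powr_form[symmetric]) (auto intro!: add_nonneg_nonneg mult_nonneg_nonneg)
  finally show ?thesis .
qed

end
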